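(* Let $\mathcal F=(f_t)$ be a continuous flow on a compact metric space $(X,d)$ and $\varepsilon>0$. Then $\mathrm{NE}^\times(\varepsilon)=(X\times\mathrm{NE}(\varepsilon))\cup(\mathrm{NE}(\varepsilon)\times X)$.
   Context: $\Gamma_\varepsilon(x)=\{y: d(f_tx,f_ty)<\varepsilon\ \forall t\in\mathbb{R}\}$ and $\mathrm{NE}(\varepsilon)=\{x:\Gamma_\varepsilon(x)\not\subset f_{[-s,s]}(x)\text{ for every } s>0\}$, where $f_{[-s,s]}(x)=\{f_rx:r\in[-s,s]\}$. On $X\times X$ with metric $\tilde d((x,y),(w,z))=\max\{d(x,w),d(y,z)\}$ and product flow $(f_t\times f_t)$: $\Gamma_\varepsilon(x,y)=\{(x',y'):\tilde d((f_tx,f_ty),(f_tx',f_ty'))<\varepsilon\ \forall t\in\mathbb{R}\}$ and $\mathrm{NE}^\times(\varepsilon)=\{(x,y):\Gamma_\varepsilon(x,y)\not\subset f_{[-s,s]}(x)\times f_{[-s,s]}(y)\text{ for any }s>0\}$. *)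

theory Defs
  imports "HOL-Analysis.Analysis"
begin

definition continuous_flow :: "'a::metric_space set \<Rightarrow> (real \<Rightarrow> 'a \<Rightarrow> 'a) \<Rightarrow> bool" where
  "continuous_flow X f \<longleftrightarrow>
     (\<forall>t. f t ` X \<subseteq> X) \<and>
     (\<forall>x\<in>X. f 0 x = x) \<and>
     (\<forall>s t. \<forall>x\<in>X. f (s + t) x = f s (f t x)) \<and>
     continuous_on (UNIV \<times> X) (\<lambda>(t, x). f t x)"

definition orbit_seg :: "(real \<Rightarrow> 'a \<Rightarrow> 'a) \<Rightarrow> real \<Rightarrow> 'a \<Rightarrow> 'a set" where
  "orbit_seg f s x = {f r x | r. r \<in> {-s..s}}"

definition Gamma :: "'a::metric_space set \<Rightarrow> (real \<Rightarrow> 'a \<Rightarrow> 'a) \<Rightarrow> real \<Rightarrow> 'a \<Rightarrow> 'a set" where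
  "Gamma X f \<epsilon> x = {y \<in> X. \<forall>t. dist (f t x) (f t y) < \<epsilon>}"

definition NE :: "'a::metric_space set \<Rightarrow> (real \<Rightarrow> 'a \<Rightarrow> 'a) \<Rightarrow> real \<Rightarrow> 'a set" where
  "NE X f \<epsilon> = {x \<in> X. \<forall>s>0. \<not> Gamma X f \<epsilon> x \<subseteq> orbit_seg f s x}"

text \<open>Product flow on X \<times> X with the max metric.\<close>
definition Gamma_prod :: "'a::metric_space set \<Rightarrow> (real \<Rightarrow> 'a \<Rightarrow> 'a) \<Rightarrow> real \<Rightarrow> 'a \<Rightarrow> 'a \<Rightarrow> ('a \<times> 'a) set" where
  "Gamma_prod X f \<epsilon> x y = {(x', y') \<in> X \<times> X.
      \<forall>t. max (dist (f t x) (f t x')) (dist (f t y) (f t y')) < \<epsilon>}"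

definition NE_prod :: "'a::metric_space set \<Rightarrow> (real \<Rightarrow> 'a \<Rightarrow> 'a) \<Rightarrow> real \<Rightarrow> ('a \<times> 'a) set" where
  "NE_prod X f \<epsilon> = {(x, y) \<in> X \<times> X.
      \<forall>s>0. \<not> Gamma_prod X f \<epsilon> x y \<subseteq> orbit_seg f s x \<times> orbit_seg f s y}"

end

theory Submission
  imports Defs
begin

lemma seg_mono: "s \<le> s' \<Longrightarrow> orbit_seg f s x \<subseteq> orbit_seg f s' x"
  unfolding orbit_seg_def by fastforce

lemma Gamma_prod_eq: "\<epsilon> > 0 \<Longrightarrow> Gamma_prod X f \<epsilon> x y = Gamma X f \<epsilon> x \<times> Gamma X f \<epsilon> y"
  unfolding Gamma_prod_def Gamma_def by auto

lemma self_Gamma: "\<epsilon> > 0 \<Longrightarrow> x \<in> X \<Longrightarrow> x \<in> Gamma X f \<epsilon> x"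
  unfolding Gamma_def by auto

theorem lemma4p4:
  fixes X :: "'a::metric_space set" and f :: "real \<Rightarrow> 'a \<Rightarrow> 'a" and \<epsilon> :: real
  assumes "compact X" and "continuous_flow X f" and "\<epsilon> > 0"
  shows "NE_prod X f \<epsilon> = (X \<times> NE X f \<epsilon>) \<union> (NE X f \<epsilon> \<times> X)"
proof (intro set_eqI iffI)
  fix p assume p: "p \<in> NE_prod X f \<epsilon>"
  obtain x y where pxy: "p = (x, y)" by (cases p)
  have xy: "x \<in> X" "y \<in> X" using p pxy unfolding NE_prod_def by auto
  have H: "\<And>s. s > 0 \<Longrightarrow> \<not> (Gamma X f \<epsilon> x \<times> Gamma X f \<epsilon> y \<subseteq> orbit_seg f s x \<times> orbit_seg f s y)"
    using p pxy assms(3) unfolding NE_prod_def by (auto simp: Gamma_prod_eq)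
  show "p \<in> (X \<times> NE X f \<epsilon>) \<union> (NE X f \<epsilon> \<times> X)"
  proof (rule ccontr)
    assume "\<not> ?thesis"
    then have "x \<notin> NE X f \<epsilon>" "y \<notin> NE X f \<epsilon>" using pxy xy by auto
    then obtain s1 s2 where s: "s1 > 0" "Gamma X f \<epsilon> x \<subseteq> orbit_seg f s1 x"
      "s2 > 0" "Gamma X f \<epsilon> y \<subseteq> orbit_seg f s2 y"
      using xy unfolding NE_def by auto
    have "Gamma X f \<epsilon> x \<subseteq> orbit_seg f (max s1 s2) x"
      using s(2) seg_mono[of s1 "max s1 s2" f x] by auto
    moreover have "Gamma X f \<epsilon> y \<subseteq> orbit_seg f (max s1 s2) y"
      using s(4) seg_mono[of s2 "max s1 s2" f y] by auto
    ultimately show False using H[of "max s1 s2"] s(1) max.strict_coboundedI1[OF s(1)] by (meson Sigma_mono)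
  qed
next
  fix p assume p: "p \<in> (X \<times> NE X f \<epsilon>) \<union> (NE X f \<epsilon> \<times> X)"
  obtain x y where pxy: "p = (x, y)" by (cases p)
  have xy: "x \<in> X" "y \<in> X" using p pxy unfolding NE_def by auto
  have gx: "x \<in> Gamma X f \<epsilon> x" and gy: "y \<in> Gamma X f \<epsilon> y"
    using xy assms(3) self_Gamma by auto
  have "\<And>s. s > 0 \<Longrightarrow> \<not> (Gamma X f \<epsilon> x \<times> Gamma X f \<epsilon> y \<subseteq> orbit_seg f s x \<times> orbit_seg f s y)"
  proof -
    fix s :: real assume s: "s > 0"
    from p pxy have "x \<in> NE X f \<epsilon> \<or> y \<in> NE X f \<epsilon>" by auto
    then have "\<not> Gamma X f \<epsilon> x \<subseteq> orbit_seg f s x \<or> \<not> Gamma X f \<epsilon> y \<subseteq> orbit_seg f s y"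
      using s unfolding NE_def by auto
    then show "\<not> (Gamma X f \<epsilon> x \<times> Gamma X f \<epsilon> y \<subseteq> orbit_seg f s x \<times> orbit_seg f s y)"
      using gx gy by blast
  qed
  then show "p \<in> NE_prod X f \<epsilon>"
    using pxy xy assms(3) unfolding NE_prod_def by (auto simp: Gamma_prod_eq)
qed

end
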